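(* Let $d\ge2$ and $0<\delta\le 1$, and let $\mathcal{P}_\delta$ be the protection of the Delaunay triangulation of $T_\delta(\mathbb{Z}^d)$ and $R_\delta$ its Delaunay radius. Writing $N_\delta=\delta^4(d^2-1)+\delta^2(d^2+2)+d^2-1$, we have $$\frac{\mathcal{P}_\delta}{R_\delta}=\begin{cases}\sqrt{\dfrac{\delta^4(d^2-1)+\delta^2(d^2-22)+d^2+23}{N_\delta}}-1 & \text{if } \frac{1}{\sqrt{d+1}}<\delta\le1,\\[2mm] \sqrt{\dfrac{d^2+2d+24}{d^2+2d}}-1 & \text{if } \delta=\frac{1}{\sqrt{d+1}},\\[2mm] \sqrt{\dfrac{\delta^4(d^2-1)+\delta^2(d^2+24d+2)+d^2-1}{N_\delta}}-1 & \text{if } 0<\delta<\frac{1}{\sqrt{d+1}}.\end{cases}$$ Moreover $R_\delta=\sqrt{N_\delta/(12d)}$.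
   Context: For $\delta\in\mathbb{R}$ the diagonal distortion $T_\delta:\mathbb{R}^d\to\mathbb{R}^d$ is $T_\delta(x)=x-\frac{1-\delta}{d}\,\Delta(x)\,\mathbf{1}$, with $\Delta(x)=\sum_i x_i$, $\mathbf{1}=(1,\dots,1)$. The Freudenthal triangulation of $[0,1]^d$ consists of the simplices whose vertex sets are chains $p_0\le p_1\le\dots\le p_k$ in $\{0,1\}^d$ (coordinatewise strictly increasing); translating it by all integer vectors gives a triangulation of $\mathbb{R}^d$ with vertex set $\mathbb{Z}^d$. For $0<\delta\le 1$ the Delaunay triangulation of $T_\delta(\mathbb{Z}^d)$ is (for $\delta<1$) the image under $T_\delta$ of this triangulation; all its $d$-simplices are congruent and have the same circumradius, the Delaunay radius $R_\delta$ (for $\delta=1$ take the $T_1$-image of the same Freudenthal simplices, i.e. the Freudenthal simplices themselves). For a Delaunay $d$-simplex $\tau$ with circumcenter $c_\tau$ and circumradius $r_\tau$, its protection is $\min\{\|q-c_\tau\|-r_\tau : q\in T_\delta(\mathbb{Z}^d)\text{ not a vertex of }\tau\}$; the protection $\mathcal{P}_\delta$ of the lattice is the infimum of this over all Delaunay $d$-simplices $\tau$. *)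

theory Defs
  imports "HOL-Analysis.Analysis"
begin

text \<open>Points of R^d are vectors of type real^'n with d = CARD('n).\<close>

definition coord_sum :: "real^'n \<Rightarrow> real" where
  "coord_sum x = (\<Sum>i\<in>UNIV. x $ i)"

definition ones_vec :: "real^'n" where
  "ones_vec = (\<chi> i. 1)"

definition diag_distortion :: "real \<Rightarrow> real^'n \<Rightarrow> real^'n" where
  "diag_distortion \<delta> x =
     x - (((1 - \<delta>) / real CARD('n)) * coord_sum x) *\<^sub>R ones_vec"

definition int_vecs :: "(real^'n) set" where
  "int_vecs = {x. \<forall>i. x $ i \<in> \<int>}"

definition cube_vertices :: "(real^'n) set" where
  "cube_vertices = {p. \<forall>i. p $ i = 0 \<or> p $ i = 1}"

definition comp_le :: "real^'n \<Rightarrow> real^'n \<Rightarrow> bool" where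
  "comp_le p q \<longleftrightarrow> (\<forall>i. p $ i \<le> q $ i)"

text \<open>Vertex sets of the d-simplices of the Freudenthal triangulation of R^d:
  integer translates of chains p_0 < ... < p_d in {0,1}^d.\<close>
definition freudenthal_simplices :: "(real^'n) set set" where
  "freudenthal_simplices =
     {(\<lambda>p. z + p) ` S | z S. z \<in> int_vecs \<and> S \<subseteq> cube_vertices \<and>
        card S = CARD('n) + 1 \<and> (\<forall>p\<in>S. \<forall>q\<in>S. comp_le p q \<or> comp_le q p)}"

definition delaunay_simplices :: "real \<Rightarrow> (real^'n) set set" where
  "delaunay_simplices \<delta> = (\<lambda>\<sigma>. diag_distortion \<delta> ` \<sigma>) ` freudenthal_simplices"

definition lattice_points :: "real \<Rightarrow> (real^'n) set" where
  "lattice_points \<delta> = diag_distortion \<delta> ` int_vecs"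

definition circumcenter :: "(real^'n) set \<Rightarrow> real^'n" where
  "circumcenter \<tau> = (THE c. \<exists>r. \<forall>v\<in>\<tau>. dist v c = r)"

definition circumradius :: "(real^'n) set \<Rightarrow> real" where
  "circumradius \<tau> = dist (SOME v. v \<in> \<tau>) (circumcenter \<tau>)"

definition simplex_protection :: "real \<Rightarrow> (real^'n) set \<Rightarrow> real" where
  "simplex_protection \<delta> \<tau> =
     Inf {dist q (circumcenter \<tau>) - circumradius \<tau> | q. q \<in> lattice_points \<delta> \<and> q \<notin> \<tau>}"

definition lattice_protection :: "real \<Rightarrow> ('n::finite) itself \<Rightarrow> real" where
  "lattice_protection \<delta> (_::'n::finite itself) =
     Inf ((simplex_protection \<delta> :: (real^'n) set \<Rightarrow> real) ` delaunay_simplices \<delta>)"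

end

theory Submission
  imports Defs
begin



abbreviation TT where "TT \<equiv> diag_distortion"

lemma coord_sum_add: "coord_sum (x + y) = coord_sum x + coord_sum (y::real^'n)"
  by (simp add: coord_sum_def sum.distrib)
lemma coord_sum_diff: "coord_sum (x - y) = coord_sum x - coord_sum (y::real^'n)"
  by (simp add: coord_sum_def sum_subtractf)
lemma coord_sum_ones: "coord_sum (ones_vec :: real^'n) = real CARD('n)"
  by (simp add: coord_sum_def ones_vec_def)

lemma TT_comp: "TT \<delta> x $ i = x $ i - ((1 - \<delta>) / real CARD('n)) * coord_sum (x::real^'n)"
  by (simp add: diag_distortion_def ones_vec_def)

lemma TT_add: "TT \<delta> (x + y) = TT \<delta> x + TT \<delta> (y::real^'n)"
  by (simp add: vec_eq_iff TT_comp coord_sum_add) (simp add: field_simps)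
lemma TT_diff: "TT \<delta> (x - y) = TT \<delta> x - TT \<delta> (y::real^'n)"
  by (simp add: vec_eq_iff TT_comp coord_sum_diff) (simp add: field_simps)

lemma TT_zero_imp:
  assumes "\<delta> \<noteq> 0" "\<And>i. (u::real^'n) $ i = ((1 - \<delta>) / real CARD('n)) * coord_sum u"
  shows "u = 0"
proof -
  let ?b = "(1 - \<delta>) / real CARD('n)"
  have "coord_sum u = (\<Sum>i\<in>UNIV. u$i)" by (simp add: coord_sum_def)
  also have "\<dots> = (\<Sum>i\<in>(UNIV::'n set). ?b * coord_sum u)" by (intro sum.cong refl assms(2))
  also have "\<dots> = (1 - \<delta>) * coord_sum u" by simp
  finally have "\<delta> * coord_sum u = 0" by (simp add: algebra_simps)
  hence "coord_sum u = 0" using assms(1) by simp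
  thus ?thesis using assms(2) by (simp add: vec_eq_iff)
qed

lemma TT_inj: assumes "\<delta> \<noteq> 0" "TT \<delta> x = TT \<delta> (y::real^'n)" shows "x = y"
proof -
  have "TT \<delta> (x - y) = 0" using assms(2) by (simp add: TT_diff)
  hence "x - y = 0" using assms(1) by (intro TT_zero_imp) (auto simp: vec_eq_iff TT_comp)
  thus ?thesis by simp
qed

lemma norm_TT_sq:
  "(norm (TT \<delta> (x::real^'n)))^2 = (\<Sum>i\<in>UNIV. (x$i)^2) - (1 - \<delta>^2) / real CARD('n) * (coord_sum x)^2"
proof -
  let ?b = "(1 - \<delta>) / real CARD('n)" and ?s = "coord_sum x"
  have h1: "(\<Sum>i\<in>(UNIV::'n set). 2 * ?b * ?s * x$i) = 2 * ?b * ?s * ?s"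
    by (simp only: sum_distrib_left[symmetric] coord_sum_def)
  have h2: "(\<Sum>i\<in>(UNIV::'n set). ?b^2 * ?s^2) = real CARD('n) * ?b^2 * ?s^2" by simp
  have "(norm (TT \<delta> x))^2 = (\<Sum>i\<in>UNIV. (x$i - ?b * ?s)^2)"
    unfolding dot_square_norm[symmetric] inner_vec_def by (simp add: TT_comp power2_eq_square)
  also have "\<dots> = (\<Sum>i\<in>UNIV. (x$i)^2 - 2 * ?b * ?s * x$i + ?b^2 * ?s^2)"
    by (rule sum.cong) (auto simp: power2_eq_square algebra_simps)
  also have "\<dots> = (\<Sum>i\<in>UNIV. (x$i)^2) - (\<Sum>i\<in>(UNIV::'n set). 2 * ?b * ?s * x$i) + (\<Sum>i\<in>(UNIV::'n set). ?b^2 * ?s^2)"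
    by (simp add: sum.distrib sum_subtractf)
  also have "\<dots> = (\<Sum>i\<in>UNIV. (x$i)^2) - 2 * ?b * ?s * ?s + real CARD('n) * ?b^2 * ?s^2"
    by (simp only: h1 h2)
  also have "\<dots> = (\<Sum>i\<in>UNIV. (x$i)^2) - (1 - \<delta>^2) / real CARD('n) * ?s^2"
    by (simp add: power2_eq_square field_simps)
  finally show ?thesis .
qed




definition cntn :: "real^'n \<Rightarrow> nat" where "cntn p = card {i. p$i = 1}"

lemma cube_val: "p \<in> cube_vertices \<Longrightarrow> p$i = 0 \<or> p$i = 1"
  by (simp add: cube_vertices_def)

lemma cube_sum: assumes "p \<in> cube_vertices" shows "coord_sum p = real (cntn p)"
proof -
  have "coord_sum p = (\<Sum>i\<in>UNIV. if p$i = 1 then 1 else 0)"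
    unfolding coord_sum_def by (rule sum.cong) (use cube_val[OF assms] in auto)
  also have "\<dots> = real (cntn p)" by (simp add: cntn_def sum.If_cases)
  finally show ?thesis .
qed

lemma cube_eq: assumes "p \<in> cube_vertices" "q \<in> cube_vertices" "\<And>i. p$i = 1 \<longleftrightarrow> q$i = 1"
  shows "p = q"
  unfolding vec_eq_iff
proof
  fix i show "p$i = q$i" using cube_val[OF assms(1), of i] cube_val[OF assms(2), of i] assms(3)[of i] by auto
qed

lemma cntn_le: "cntn (p::real^'n) \<le> CARD('n)"
  unfolding cntn_def by (rule card_mono) auto

locale fchain =
  fixes S :: "(real^'n) set"
  assumes cube: "S \<subseteq> cube_vertices"
    and cardS: "card S = CARD('n) + 1"
    and ch: "\<forall>p\<in>S. \<forall>q\<in>S. comp_le p q \<or> comp_le q p"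
begin

lemma finS: "finite S"
proof (rule ccontr)
  assume "infinite S" hence "card S = 0" by simp
  thus False using cardS by simp
qed

lemma le_imp: assumes "p \<in> S" "q \<in> S" "cntn p \<le> cntn q" shows "comp_le p q"
proof (cases "comp_le p q")
  case False
  hence cqp: "comp_le q p" using ch assms by blast
  have pc: "p \<in> cube_vertices" and qc: "q \<in> cube_vertices" using cube assms by auto
  have sub: "{i. q$i = 1} \<subseteq> {i. p$i = 1}"
  proof
    fix i assume "i \<in> {i. q$i = 1}"
    hence "q$i = 1" by simp
    moreover have "q$i \<le> p$i" using cqp by (simp add: comp_le_def)
    ultimately show "i \<in> {i. p$i = 1}" using cube_val[OF pc, of i] by auto
  qed
  have c1: "card {i. p$i = 1} \<le> card {i. q$i = 1}" using assms(3) by (simp add: cntn_def)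
  have c2: "card {i. q$i = 1} \<le> card {i. p$i = 1}" using sub by (intro card_mono) simp_all
  have "{i. q$i = 1} = {i. p$i = 1}"
    using sub c1 c2 by (intro card_subset_eq) simp_all
  hence "p = q" using cube_eq[OF pc qc] by blast
  thus ?thesis by (simp add: comp_le_def)
qed simp

lemma cntn_inj: "inj_on cntn S"
proof
  fix p q assume "p \<in> S" "q \<in> S" "cntn p = cntn q"
  hence "comp_le p q" "comp_le q p" using le_imp by auto
  thus "p = q" by (auto simp: comp_le_def vec_eq_iff intro: antisym)
qed

lemma cntn_image: "cntn ` S = {0..CARD('n)}"
proof (rule card_subset_eq)
  show "cntn ` S \<subseteq> {0..CARD('n)}" using cntn_le by auto
  show "card (cntn ` S) = card {0..CARD('n)}" using card_image[OF cntn_inj] cardS by simp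
qed simp

lemma ex_cnt: assumes "k \<le> CARD('n)" shows "\<exists>p\<in>S. cntn p = k"
proof -
  have "k \<in> cntn ` S" using cntn_image assms by simp
  thus ?thesis by blast
qed

lemma top_elem: assumes "p \<in> S" "cntn p = CARD('n)" shows "p$i = 1"
proof -
  have "{i. p$i = 1} = UNIV"
    using assms(2) by (intro card_eq_UNIV_imp_eq_UNIV) (auto simp: cntn_def)
  thus ?thesis by auto
qed

definition rho :: "'n \<Rightarrow> nat" where "rho i = Min (cntn ` {p\<in>S. p$i = 1})"

lemma rho_set: "finite (cntn ` {p\<in>S. p$i = 1})" "cntn ` {p\<in>S. p$i = 1} \<noteq> {}"
proof -
  show "finite (cntn ` {p\<in>S. p$i = 1})" using finS by simp
  obtain p where p: "p \<in> S" "cntn p = CARD('n)" using ex_cnt by blast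
  hence "p$i = 1" by (rule top_elem)
  hence "p \<in> {p\<in>S. p$i = 1}" using p(1) by simp
  thus "cntn ` {p\<in>S. p$i = 1} \<noteq> {}" by blast
qed

lemma rho_char: assumes "p \<in> S" shows "p$i = 1 \<longleftrightarrow> rho i \<le> cntn p"
proof
  assume "p$i = 1" thus "rho i \<le> cntn p" unfolding rho_def using rho_set assms by (intro Min_le) auto
next
  assume a: "rho i \<le> cntn p"
  have "rho i \<in> cntn ` {p\<in>S. p$i = 1}" unfolding rho_def using rho_set by (rule Min_in)
  then obtain p0 where p0: "p0 \<in> S" "p0$i = 1" "cntn p0 = rho i" by auto
  hence "comp_le p0 p" using le_imp assms a by auto
  hence "1 \<le> p$i" using p0(2) unfolding comp_le_def by metis
  thus "p$i = 1" using cube_val[of p i] cube assms by auto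
qed

lemma rho_ge1: "1 \<le> rho i"
proof -
  have "rho i \<in> cntn ` {p\<in>S. p$i = 1}" unfolding rho_def using rho_set by (rule Min_in)
  then obtain p0 where p0: "p0 \<in> S" "p0$i = 1" "cntn p0 = rho i" by auto
  have "0 < card {j. p0$j = 1}" using p0(2) by (subst card_gt_0_iff) auto
  thus ?thesis using p0(3) by (simp add: cntn_def)
qed

lemma rho_le: "rho i \<le> CARD('n)"
proof -
  obtain p where p: "p \<in> S" "cntn p = CARD('n)" using ex_cnt by blast
  hence "p$i = 1" by (rule top_elem)
  hence "rho i \<le> cntn p" using rho_char[OF p(1)] by simp
  thus ?thesis using p(2) by simp
qed

lemma card_rho_le: assumes "k \<le> CARD('n)" shows "card {i. rho i \<le> k} = k"
proof -
  obtain p where p: "p \<in> S" "cntn p = k" using ex_cnt assms by blast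
  have "{i. rho i \<le> k} = {i. p$i = 1}" using rho_char[OF p(1)] p(2) by auto
  thus ?thesis using p(2) by (simp add: cntn_def)
qed

lemma rho_inj: "inj rho"
proof
  fix i j assume e: "rho i = rho j"
  let ?k = "rho i"
  let ?A = "{l. rho l \<le> ?k}" and ?B = "{l. rho l \<le> ?k - 1}"
  have "card (?A - ?B) = card ?A - card ?B" by (rule card_Diff_subset) auto
  also have "\<dots> = 1" using card_rho_le[of ?k] card_rho_le[of "?k - 1"] rho_le[of i] rho_ge1[of i] by simp
  finally have "card (?A - ?B) \<le> Suc 0" by simp
  hence "\<forall>a\<in>?A - ?B. \<forall>b\<in>?A - ?B. a = b" by (subst (asm) card_le_Suc0_iff_eq) auto
  moreover have "i \<in> ?A - ?B" "j \<in> ?A - ?B" using e rho_ge1[of i] by auto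
  ultimately show "i = j" by blast
qed

lemma rho_bij: "bij_betw rho UNIV {1..CARD('n)}"
  unfolding bij_betw_def
proof
  show "inj_on rho UNIV" using rho_inj by simp
  show "range rho = {1..CARD('n)}"
  proof (rule card_subset_eq)
    show "range rho \<subseteq> {1..CARD('n)}" using rho_ge1 rho_le by auto
    show "card (range rho) = card {1..CARD('n)}" using card_image[OF rho_inj] by simp
  qed simp
qed

lemma rho_surj: assumes "1 \<le> k" "k \<le> CARD('n)" shows "\<exists>i. rho i = k"
proof -
  have "k \<in> {1..CARD('n)}" using assms by simp
  hence "k \<in> range rho" using rho_bij unfolding bij_betw_def by simp
  thus ?thesis by auto
qed

lemma unit_diff: "\<exists>p\<in>S. \<exists>p'\<in>S. \<forall>j. p$j - p'$j = (if j = i then 1 else 0)"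
proof -
  obtain p where p: "p \<in> S" "cntn p = rho i" using ex_cnt rho_le by blast
  have "rho i - 1 \<le> CARD('n)" using rho_le[of i] by simp
  then obtain p' where p': "p' \<in> S" "cntn p' = rho i - 1" using ex_cnt by blast
  have "p$j - p'$j = (if j = i then 1 else 0)" for j
  proof -
    have c1: "p$j = 1 \<longleftrightarrow> rho j \<le> rho i" using rho_char[OF p(1)] p(2) by simp
    have c2a: "p'$j = 1 \<longleftrightarrow> rho j \<le> rho i - 1" using rho_char[OF p'(1), of j] p'(2) by simp
    have c2b: "rho j \<le> rho i - 1 \<longleftrightarrow> rho j < rho i" using rho_ge1[of i] by arith
    have c2: "p'$j = 1 \<longleftrightarrow> rho j < rho i" using c2a c2b by simp
    have pc: "p \<in> cube_vertices" "p' \<in> cube_vertices" using cube p(1) p'(1) by auto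
    have v1: "p$j = 0 \<or> p$j = 1" by (rule cube_val[OF pc(1)])
    have v2: "p'$j = 0 \<or> p'$j = 1" by (rule cube_val[OF pc(2)])
    show ?thesis
    proof (cases "j = i")
      case True thus ?thesis using c1 c2 v1 v2 by auto
    next
      case False
      hence "rho j \<noteq> rho i" using rho_inj by (auto dest: injD)
      thus ?thesis using c1 c2 v1 v2 False by auto
    qed
  qed
  thus ?thesis using p p' by blast
qed

end




lemma sum_lin: "(\<Sum>k=1..n. 2 * real k - 1 - D) = real n ^ 2 - real n * D"
  by (induction n) (auto simp: power2_eq_square algebra_simps)

lemma sum_sq: "(\<Sum>k=1..n. (2 * real k - 1 - D)^2) = real n * (4 * real n ^ 2 - 1) / 3 - 2 * D * real n ^ 2 + real n * D^2"
  by (induction n) (auto simp: power2_eq_square field_simps)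

lemma pair_id:
  fixes y :: "nat \<Rightarrow> real"
  shows "real n * (\<Sum>k=1..n. (y k)^2) - (\<Sum>k=1..n. y k)^2 + (\<Sum>k=1..n. (2 * real k - 1 - real n) * y k)
       = (\<Sum>l=1..n. \<Sum>k=1..<l. (y k - y l) * (y k - y l - 1))"
proof (induction n)
  case 0 then show ?case by simp
next
  case (Suc n)
  let ?Y = "y (Suc n)" and ?s = "\<Sum>k=1..n. y k" and ?s2 = "\<Sum>k=1..n. (y k)^2"
    and ?t = "\<Sum>k=1..n. (2 * real k - 1 - real n) * y k"
  have t1: "(\<Sum>k=1..n. (2 * real k - 1 - real (Suc n)) * y k) = ?t - ?s"
  proof -
    have "(\<Sum>k=1..n. (2 * real k - 1 - real (Suc n)) * y k) = (\<Sum>k=1..n. (2 * real k - 1 - real n) * y k - y k)"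
      by (rule sum.cong) (auto simp: algebra_simps)
    thus ?thesis by (simp add: sum_subtractf)
  qed
  have last: "(\<Sum>k=1..<Suc n. (y k - ?Y) * (y k - ?Y - 1)) = ?s2 - 2 * ?Y * ?s + real n * ?Y^2 - ?s + real n * ?Y"
  proof -
    have "(\<Sum>k=1..<Suc n. (y k - ?Y) * (y k - ?Y - 1)) = (\<Sum>k=1..n. (y k)^2 + (- 2 * ?Y - 1) * y k + (?Y^2 + ?Y))"
      by (subst atLeastLessThanSuc_atLeastAtMost, rule sum.cong) (auto simp: power2_eq_square algebra_simps)
    also have "\<dots> = ?s2 + (- 2 * ?Y - 1) * ?s + real n * (?Y^2 + ?Y)"
      by (simp add: sum.distrib sum_distrib_left)
    finally show ?thesis by (simp add: algebra_simps)
  qed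
  have "(\<Sum>l=1..Suc n. \<Sum>k=1..<l. (y k - y l) * (y k - y l - 1))
      = (\<Sum>l=1..n. \<Sum>k=1..<l. (y k - y l) * (y k - y l - 1)) + (\<Sum>k=1..<Suc n. (y k - ?Y) * (y k - ?Y - 1))"
    by simp
  also have "\<dots> = real n * ?s2 - ?s^2 + ?t + (?s2 - 2 * ?Y * ?s + real n * ?Y^2 - ?s + real n * ?Y)"
    using Suc.IH last by simp
  also have "\<dots> = real (Suc n) * (\<Sum>k=1..Suc n. (y k)^2) - (\<Sum>k=1..Suc n. y k)^2
      + (\<Sum>k=1..Suc n. (2 * real k - 1 - real (Suc n)) * y k)"
    using t1 by (simp add: power2_eq_square algebra_simps)
  finally show ?case by simp
qed

lemma pair_ge:
  fixes g :: "nat \<Rightarrow> nat \<Rightarrow> real"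
  assumes "\<And>k l. 1 \<le> k \<Longrightarrow> k < l \<Longrightarrow> l \<le> n \<Longrightarrow> 0 \<le> g k l" "1 \<le> k0" "k0 < l0" "l0 \<le> n"
  shows "g k0 l0 \<le> (\<Sum>l=1..n. \<Sum>k=1..<l. g k l)"
proof -
  have "g k0 l0 \<le> (\<Sum>k=1..<l0. g k l0)"
    by (rule member_le_sum) (use assms in auto)
  also have "\<dots> \<le> (\<Sum>l=1..n. \<Sum>k=1..<l. g k l)"
    by (rule member_le_sum[where f = "\<lambda>l. \<Sum>k=1..<l. g k l"]) (use assms in \<open>auto intro!: sum_nonneg\<close>)
  finally show ?thesis .
qed

lemma pair_nonneg:
  fixes g :: "nat \<Rightarrow> nat \<Rightarrow> real"
  assumes "\<And>k l. 1 \<le> k \<Longrightarrow> k < l \<Longrightarrow> l \<le> n \<Longrightarrow> 0 \<le> g k l"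
  shows "0 \<le> (\<Sum>l=1..n. \<Sum>k=1..<l. g k l)"
  using assms by (auto intro!: sum_nonneg)

lemma pair_zero:
  fixes g :: "nat \<Rightarrow> nat \<Rightarrow> real"
  assumes "\<And>k l. 1 \<le> k \<Longrightarrow> k < l \<Longrightarrow> l \<le> n \<Longrightarrow> g k l = 0"
  shows "(\<Sum>l=1..n. \<Sum>k=1..<l. g k l) = 0"
  using assms by (auto intro!: sum.neutral)

lemma int_tt: assumes "t \<in> \<int>" shows "0 \<le> t * (t - 1::real)"
proof -
  obtain m where m: "t = of_int m" using assms Ints_cases by blast
  have "0 \<le> m * (m - 1)"
  proof (cases "m \<ge> 1")
    case True thus ?thesis by simp
  next
    case False hence "m \<le> 0" by simp
    thus ?thesis by (simp add: mult_nonpos_nonpos)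
  qed
  hence "0 \<le> real_of_int (m * (m - 1))" by linarith
  thus ?thesis using m by simp
qed

lemma int_tt2: assumes "t \<in> \<int>" "t \<noteq> 0" "t \<noteq> 1" shows "2 \<le> t * (t - 1::real)"
proof -
  obtain m where m: "t = of_int m" using assms Ints_cases by blast
  have "m \<noteq> 0" "m \<noteq> 1" using assms m by auto
  have "2 \<le> m * (m - 1)"
  proof (cases "m \<ge> 2")
    case True thus ?thesis using mult_mono[of 2 m 1 "m - 1"] by simp
  next
    case False hence "m \<le> -1" using \<open>m \<noteq> 0\<close> \<open>m \<noteq> 1\<close> by simp
    hence "1 * 2 \<le> (-m) * (1 - m)" by (intro mult_mono) auto
    thus ?thesis by (simp add: algebra_simps)
  qed
  hence "2 \<le> real_of_int (m * (m - 1))" by linarith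
  thus ?thesis using m by simp
qed




definition Af :: "real^'n \<Rightarrow> real" where "Af u = (\<Sum>i\<in>UNIV. u$i * (u$i - 1))"

lemma single_sum: fixes f :: "'n::finite \<Rightarrow> real \<Rightarrow> real" shows "(\<Sum>j\<in>UNIV. f j (if j = i0 then v else 0)) = f i0 v + (\<Sum>j\<in>UNIV - {i0}. f j 0)"
proof -
  have "(\<Sum>j\<in>UNIV. f j (if j = i0 then v else 0)) = f i0 v + (\<Sum>j\<in>UNIV - {i0}. f j (if j = i0 then v else 0))"
    by (subst sum.remove[of UNIV i0]) auto
  also have "(\<Sum>j\<in>UNIV - {i0}. f j (if j = i0 then v else 0)) = (\<Sum>j\<in>UNIV - {i0}. f j 0)"
    by (rule sum.cong) auto
  finally show ?thesis .
qed

context fchain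
begin

definition sig :: "nat \<Rightarrow> 'n" where "sig = inv_into UNIV rho"

lemma sig_rho [simp]: "sig (rho i) = i"
  unfolding sig_def using rho_inj by simp

lemma rho_sig: assumes "1 \<le> k" "k \<le> CARD('n)" shows "rho (sig k) = k"
proof -
  have "k \<in> range rho" using rho_bij assms unfolding bij_betw_def by auto
  thus ?thesis unfolding sig_def by (rule f_inv_into_f)
qed

lemma reindex: "(\<Sum>i\<in>UNIV. g i (rho i)) = (\<Sum>k=1..CARD('n). g (sig k) k)"
proof -
  have "(\<Sum>i\<in>UNIV. g i (rho i)) = (\<Sum>i\<in>UNIV. (\<lambda>k. g (sig k) k) (rho i))" by simp
  also have "\<dots> = (\<Sum>k=1..CARD('n). g (sig k) k)" by (rule sum.reindex_bij_betw[OF rho_bij])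
  finally show ?thesis .
qed

abbreviation EE :: "'n \<Rightarrow> real" where "EE i \<equiv> 2 * real (rho i) - 1 - real CARD('n)"

lemma sumE: "(\<Sum>i\<in>UNIV. EE i) = 0"
  using reindex[of "\<lambda>i k. 2 * real k - 1 - real CARD('n)"] sum_lin[where n="CARD('n)" and D="real CARD('n)"]
  by (simp add: power2_eq_square)

lemma sumE2: "(\<Sum>i\<in>UNIV. (EE i)^2) = (real CARD('n)^3 - real CARD('n)) / 3"
  using reindex[of "\<lambda>i k. (2 * real k - 1 - real CARD('n))^2"] sum_sq[where n="CARD('n)" and D="real CARD('n)"]
  by (simp add: power2_eq_square power3_eq_cube field_simps)

definition Pf :: "real^'n \<Rightarrow> real" where
  "Pf u = real CARD('n) * (\<Sum>i\<in>UNIV. (u$i)^2) - (coord_sum u)^2 + (\<Sum>i\<in>UNIV. EE i * u$i)"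

definition wv :: "real \<Rightarrow> real^'n" where "wv a = (\<chi> i. (1 - a * EE i) / 2)"

lemma key_identity:
  fixes \<delta> a :: real
  assumes a: "a = (1 - \<delta>^2) / real CARD('n)"
  shows "(\<Sum>i\<in>UNIV. (u$i - wv a $ i)^2) - a * (coord_sum u - coord_sum (wv a))^2
     = (\<delta>^4 * (real CARD('n)^2 - 1) + \<delta>^2 * (real CARD('n)^2 + 2) + real CARD('n)^2 - 1) / (12 * real CARD('n))
       + \<delta>^2 * Af u + a * Pf u"
proof -
  let ?d = "real CARD('n)"
  let ?s2 = "\<Sum>i\<in>UNIV. (u$i)^2" and ?m = "coord_sum u" and ?eu = "\<Sum>i\<in>UNIV. EE i * u$i"
  have dpos: "?d > 0" by simp
  have sw: "coord_sum (wv a) = ?d / 2"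
  proof -
    have "coord_sum (wv a) = (\<Sum>i\<in>UNIV. 1/2 - (a/2) * EE i)"
      unfolding coord_sum_def wv_def by (rule sum.cong) (auto simp: field_simps)
    also have "\<dots> = (\<Sum>i\<in>(UNIV::'n set). 1/2) - (\<Sum>i\<in>UNIV. (a/2) * EE i)"
      by (rule sum_subtractf)
    also have "\<dots> = ?d / 2"
      unfolding sum_distrib_left[symmetric] sumE by simp
    finally show ?thesis .
  qed
  have sw2: "(\<Sum>i\<in>UNIV. (wv a $ i)^2) = (?d + a^2 * ((?d^3 - ?d) / 3)) / 4"
  proof -
    have "(\<Sum>i\<in>UNIV. (wv a $ i)^2) = (\<Sum>i\<in>UNIV. 1/4 - (a/2) * EE i + (a^2/4) * (EE i)^2)"
      unfolding wv_def by (rule sum.cong) (auto simp: field_simps power2_eq_square)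
    also have "\<dots> = (\<Sum>i\<in>UNIV. 1/4 - (a/2) * EE i) + (\<Sum>i\<in>UNIV. (a^2/4) * (EE i)^2)"
      by (rule sum.distrib)
    also have "\<dots> = ((\<Sum>i\<in>(UNIV::'n set). 1/4) - (\<Sum>i\<in>UNIV. (a/2) * EE i)) + (\<Sum>i\<in>UNIV. (a^2/4) * (EE i)^2)"
      by (subst sum_subtractf) (rule refl)
    also have "\<dots> = ?d/4 - (a/2) * 0 + (a^2/4) * ((?d^3 - ?d) / 3)"
      unfolding sum_distrib_left[symmetric] sumE sumE2 by simp
    finally show ?thesis by (simp add: field_simps)
  qed
  have suw: "(\<Sum>i\<in>UNIV. u$i * wv a $ i) = (?m - a * ?eu) / 2"
  proof -
    have "(\<Sum>i\<in>UNIV. u$i * wv a $ i) = (\<Sum>i\<in>UNIV. (1/2) * u$i - (a/2) * (EE i * u$i))"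
      unfolding wv_def by (rule sum.cong) (auto simp: field_simps)
    also have "\<dots> = (1/2) * ?m - (a/2) * ?eu"
      unfolding coord_sum_def by (simp only: sum_subtractf sum_distrib_left[symmetric])
    finally show ?thesis by simp
  qed
  have e1: "(\<Sum>i\<in>UNIV. (u$i - wv a $ i)^2) = ?s2 - 2 * (\<Sum>i\<in>UNIV. u$i * wv a $ i) + (\<Sum>i\<in>UNIV. (wv a $ i)^2)"
  proof -
    have "(\<Sum>i\<in>UNIV. (u$i - wv a $ i)^2) = (\<Sum>i\<in>UNIV. (u$i)^2 - 2 * (u$i * wv a $ i) + (wv a $ i)^2)"
      by (rule sum.cong) (auto simp: power2_eq_square algebra_simps)
    thus ?thesis by (simp only: sum.distrib sum_subtractf sum_distrib_left[symmetric])
  qed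
  have af: "Af u = ?s2 - ?m"
  proof -
    have "Af u = (\<Sum>i\<in>UNIV. (u$i)^2 - u$i)" unfolding Af_def by (rule sum.cong) (auto simp: power2_eq_square algebra_simps)
    thus ?thesis by (simp add: sum_subtractf coord_sum_def)
  qed
  have pf: "Pf u = ?d * ?s2 - ?m^2 + ?eu" unfolding Pf_def by simp
  have d2: "\<delta>^2 = 1 - a * ?d" using a dpos by (simp add: field_simps)
  have d4: "\<delta>^4 = (1 - a * ?d)^2" using d2 by (metis power2_eq_square power4_eq_xxxx power_mult_distrib mult.assoc)
  show ?thesis
    unfolding e1 sw sw2 suw af pf d4 d2 using dpos
    by (simp add: field_simps power2_eq_square power3_eq_cube)
qed

end




lemma inner_dist_id:
  fixes a b x y :: "real^'n"
  shows "inner (a - b) (y - x) = ((norm (a - x))^2 - (norm (a - y))^2 - (norm (b - x))^2 + (norm (b - y))^2) / 2"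
  by (simp add: dot_square_norm[symmetric] inner_diff_left inner_diff_right inner_commute field_simps)

lemma sqrt_sq_dist: "dist (v::real^'n) c = sqrt ((dist v c)^2)"
  by simp

context fchain
begin

lemma P_pairs: "Pf u = (\<Sum>l=1..CARD('n). \<Sum>k=1..<l. (u$(sig k) - u$(sig l)) * (u$(sig k) - u$(sig l) - 1))"
proof -
  have r1: "(\<Sum>i\<in>UNIV. (u$i)^2) = (\<Sum>k=1..CARD('n). (u$(sig k))^2)"
    using reindex[of "\<lambda>i k. (u$i)^2"] by simp
  have r2: "coord_sum u = (\<Sum>k=1..CARD('n). u$(sig k))"
    using reindex[of "\<lambda>i k. u$i"] by (simp add: coord_sum_def)
  have r3: "(\<Sum>i\<in>UNIV. EE i * u$i) = (\<Sum>k=1..CARD('n). (2 * real k - 1 - real CARD('n)) * u$(sig k))"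
    using reindex[of "\<lambda>i k. (2 * real k - 1 - real CARD('n)) * u$i"] by simp
  show ?thesis unfolding Pf_def r1 r2 r3
    using pair_id[where n = "CARD('n)" and y = "\<lambda>k. u$(sig k)"] by simp
qed

lemma int_comp: "u \<in> int_vecs \<Longrightarrow> u$i \<in> \<int>"
  by (simp add: int_vecs_def)

lemma Pf_nonneg: assumes "u \<in> int_vecs" shows "0 \<le> Pf u"
  unfolding P_pairs
  by (rule pair_nonneg, rule int_tt) (intro Ints_diff int_comp[OF assms])

lemma Af_nonneg: assumes "u \<in> int_vecs" shows "0 \<le> Af u"
  unfolding Af_def by (intro sum_nonneg int_tt int_comp[OF assms])

lemma Af_ge2: assumes "u \<in> int_vecs" "u$i0 \<noteq> 0" "u$i0 \<noteq> 1" shows "2 \<le> Af u"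
proof -
  have "2 \<le> u$i0 * (u$i0 - 1)" by (rule int_tt2) (use assms int_comp in auto)
  also have "\<dots> \<le> Af u" unfolding Af_def
    by (rule member_le_sum) (auto intro: int_tt int_comp[OF assms(1)])
  finally show ?thesis .
qed

lemma Af_01: assumes "\<And>i. u$i = 0 \<or> u$i = 1" shows "Af u = 0"
  unfolding Af_def by (rule sum.neutral) (use assms in force)

lemma Pf_notin: assumes "u \<in> int_vecs" "\<And>i. u$i = 0 \<or> u$i = 1" "u \<notin> S" shows "2 \<le> Pf u"
proof (cases "\<exists>i j. rho i < rho j \<and> u$i = 0 \<and> u$j = 1")
  case True
  then obtain i j where ij: "rho i < rho j" "u$i = 0" "u$j = 1" by blast
  let ?g = "\<lambda>k l. (u$(sig k) - u$(sig l)) * (u$(sig k) - u$(sig l) - 1)"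
  have "?g (rho i) (rho j) \<le> (\<Sum>l=1..CARD('n). \<Sum>k=1..<l. ?g k l)"
    by (rule pair_ge) (use ij rho_ge1 rho_le in \<open>auto intro: int_tt Ints_diff int_comp[OF assms(1)]\<close>)
  moreover have "?g (rho i) (rho j) = 2" using ij by simp
  ultimately show ?thesis unfolding P_pairs by simp
next
  case False
  let ?O = "{i. u$i = 1}"
  let ?c = "card ?O"
  have down: "i \<in> ?O" if "j \<in> ?O" "rho i \<le> rho j" for i j
  proof (cases "rho i = rho j")
    case True thus ?thesis using rho_inj that by (auto dest: injD)
  next
    case False
    hence "rho i < rho j" using that by simp
    hence "u$i \<noteq> 0" using \<open>\<not> (\<exists>i j. rho i < rho j \<and> u$i = 0 \<and> u$j = 1)\<close> that by auto
    thus ?thesis using assms(2)[of i] by auto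
  qed
  have sub: "?O \<subseteq> {i. rho i \<le> ?c}"
  proof
    fix j assume j: "j \<in> ?O"
    have "{i. rho i \<le> rho j} \<subseteq> ?O" using down j by auto
    hence "card {i. rho i \<le> rho j} \<le> ?c" by (intro card_mono) auto
    hence "rho j \<le> ?c" using card_rho_le[OF rho_le[of j]] by simp
    thus "j \<in> {i. rho i \<le> ?c}" by simp
  qed
  have cle: "?c \<le> CARD('n)" using cntn_le[of u] by (simp add: cntn_def)
  have eqO: "?O = {i. rho i \<le> ?c}"
    by (rule card_subset_eq) (use sub card_rho_le[OF cle] in auto)
  obtain p where p: "p \<in> S" "cntn p = ?c" using ex_cnt cle by blast
  have pc: "p \<in> cube_vertices" using cube p(1) by auto
  have uc: "u \<in> cube_vertices" using assms(2) by (simp add: cube_vertices_def)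
  have "u = p"
  proof (rule cube_eq[OF uc pc])
    fix i show "u$i = 1 \<longleftrightarrow> p$i = 1" using rho_char[OF p(1), of i] p(2) eqO by auto
  qed
  thus ?thesis using assms(3) p(1) by simp
qed

lemma S_vals: assumes "p \<in> S" shows "Af p = 0" "Pf p = 0"
proof -
  have pc: "p \<in> cube_vertices" using cube assms by auto
  show "Af p = 0" by (rule Af_01) (rule cube_val[OF pc])
  show "Pf p = 0" unfolding P_pairs
  proof (rule pair_zero)
    fix k l assume kl: "1 \<le> k" "k < l" "l \<le> CARD('n)"
    have vk: "p$(sig k) = 0 \<or> p$(sig k) = 1" and vl: "p$(sig l) = 0 \<or> p$(sig l) = 1"
      using cube_val[OF pc] by auto
    have imp: "p$(sig k) = 1" if "p$(sig l) = 1"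
    proof -
      have "rho (sig l) \<le> cntn p" using that rho_char[OF assms] by simp
      hence "l \<le> cntn p" using rho_sig[of l] kl by simp
      hence "rho (sig k) \<le> cntn p" using rho_sig[of k] kl by simp
      thus ?thesis using rho_char[OF assms] by simp
    qed
    show "(p$(sig k) - p$(sig l)) * (p$(sig k) - p$(sig l) - 1) = 0"
      using vk vl imp by auto
  qed
qed

lemma dist_formula:
  fixes \<delta> :: real
  assumes a: "a = (1 - \<delta>^2) / real CARD('n)"
  shows "(dist (TT \<delta> x) (TT \<delta> (z + wv a)))^2
     = (\<delta>^4 * (real CARD('n)^2 - 1) + \<delta>^2 * (real CARD('n)^2 + 2) + real CARD('n)^2 - 1) / (12 * real CARD('n))
       + \<delta>^2 * Af (x - z) + a * Pf (x - z)"
proof -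
  have "(dist (TT \<delta> x) (TT \<delta> (z + wv a)))^2 = (norm (TT \<delta> ((x - z) - wv a)))^2"
    by (simp add: dist_norm TT_diff[symmetric] algebra_simps)
  also have "\<dots> = (\<Sum>i\<in>UNIV. ((x - z)$i - wv a $ i)^2) - a * (coord_sum (x - z) - coord_sum (wv a))^2"
    by (simp add: norm_TT_sq coord_sum_diff a)
  also note key_identity[OF a, of "x - z"]
  finally show ?thesis .
qed

end




lemma inner_TT_unit:
  fixes e u :: "real^'n"
  assumes ee: "\<And>j. e$j = (if j = i then 1 else 0)"
  shows "inner (TT \<delta> e) u = u$i - ((1 - \<delta>) / real CARD('n)) * coord_sum u"
proof -
  let ?b = "(1 - \<delta>) / real CARD('n)"
  have ce: "coord_sum e = 1"
    unfolding coord_sum_def using ee by (simp add: sum.delta)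
  have "inner (TT \<delta> e) u = (\<Sum>j\<in>UNIV. (if j = i then u$j else 0) - ?b * u$j)"
    unfolding inner_vec_def by (rule sum.cong) (auto simp: TT_comp ce ee algebra_simps)
  also have "\<dots> = u$i - ?b * coord_sum u"
    unfolding coord_sum_def sum_subtractf sum_distrib_left[symmetric] by simp
  finally show ?thesis .
qed

context fchain
begin

lemma main_simplex:
  fixes \<delta> :: real
  assumes dpos: "0 < \<delta>" and dle: "\<delta> \<le> 1" and z: "z \<in> int_vecs" and d2: "2 \<le> CARD('n)"
  defines "\<tau> \<equiv> TT \<delta> ` ((\<lambda>p. z + p) ` S)"
  defines "a \<equiv> (1 - \<delta>^2) / real CARD('n)"
  defines "R2 \<equiv> (\<delta>^4 * (real CARD('n)^2 - 1) + \<delta>^2 * (real CARD('n)^2 + 2) + real CARD('n)^2 - 1) / (12 * real CARD('n))"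
  defines "F \<equiv> min (2 * \<delta>^2) (2 * a)"
  shows "circumradius \<tau> = sqrt R2 \<and> simplex_protection \<delta> \<tau> = sqrt (R2 + F) - sqrt R2"
proof -
  let ?c = "TT \<delta> (z + wv a)"
  let ?d = "real CARD('n)"
  have a_nn: "0 \<le> a" unfolding a_def using dpos dle by (simp add: power_le_one)
  have df: "(dist (TT \<delta> x) ?c)^2 = R2 + \<delta>^2 * Af (x - z) + a * Pf (x - z)" for x
    unfolding R2_def by (rule dist_formula) (simp add: a_def)
  have vert: "dist v ?c = sqrt R2" if "v \<in> \<tau>" for v
  proof -
    have "v \<in> TT \<delta> ` ((\<lambda>p. z + p) ` S)" using that by (simp add: \<tau>_def)
    then obtain p where p: "p \<in> S" "v = TT \<delta> (z + p)" by auto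
    have "(dist v ?c)^2 = R2" using df[of "z + p"] S_vals[OF p(1)] p(2) by simp
    thus ?thesis by (metis sqrt_sq_dist)
  qed
  have cc: "circumcenter \<tau> = ?c"
    unfolding circumcenter_def
  proof (rule the_equality)
    show "\<exists>r. \<forall>v\<in>\<tau>. dist v ?c = r" using vert by blast
  next
    fix c' assume "\<exists>r. \<forall>v\<in>\<tau>. dist v c' = r"
    then obtain r' where r': "\<And>v. v \<in> \<tau> \<Longrightarrow> dist v c' = r'" by blast
    let ?u = "c' - ?c"
    let ?b = "(1 - \<delta>) / real CARD('n)"
    have uu: "?u $ i = ?b * coord_sum ?u" for i
    proof -
      obtain p p' where pp: "p \<in> S" "p' \<in> S" "\<And>j. p$j - p'$j = (if j = i then 1 else 0)"
        using unit_diff[of i] by blast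
      let ?v1 = "TT \<delta> (z + p)" and ?v2 = "TT \<delta> (z + p')"
      have v1: "?v1 \<in> \<tau>" and v2: "?v2 \<in> \<tau>" unfolding \<tau>_def using pp by auto
      have "inner (?v1 - ?v2) (c' - ?c) = ((norm (?v1 - ?c))^2 - (norm (?v1 - c'))^2 - (norm (?v2 - ?c))^2 + (norm (?v2 - c'))^2) / 2"
        by (rule inner_dist_id)
      also have "\<dots> = 0" using vert[OF v1] vert[OF v2] r'[OF v1] r'[OF v2] by (simp add: dist_norm)
      finally have i0: "inner (?v1 - ?v2) ?u = 0" .
      let ?e = "p - p'"
      have ee: "?e $ j = (if j = i then 1 else 0)" for j using pp(3)[of j] by simp
      have "?v1 - ?v2 = TT \<delta> ?e" by (simp add: TT_diff[symmetric])
      hence "0 = inner (TT \<delta> ?e) ?u" using i0 by simp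
      also have "\<dots> = ?u$i - ?b * coord_sum ?u" by (rule inner_TT_unit[OF ee])
      finally show ?thesis by simp
    qed
    have "?u = 0" by (rule TT_zero_imp[of \<delta>, OF _ uu]) (use dpos in simp)
    thus "c' = ?c" by simp
  qed
  have tne: "\<tau> \<noteq> {}"
  proof -
    obtain p where "p \<in> S" "cntn p = 0" using ex_cnt by blast
    thus ?thesis unfolding \<tau>_def by auto
  qed
  have cr: "circumradius \<tau> = sqrt R2"
  proof -
    have "(SOME v. v \<in> \<tau>) \<in> \<tau>" using tne by (simp add: some_in_eq)
    thus ?thesis unfolding circumradius_def cc using vert by simp
  qed
  have notin: "TT \<delta> (z + u) \<notin> \<tau>" if "u \<notin> S" for u
  proof
    assume "TT \<delta> (z + u) \<in> \<tau>"
    hence "TT \<delta> (z + u) \<in> TT \<delta> ` ((\<lambda>p. z + p) ` S)" by (simp add: \<tau>_def)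
    then obtain p where p: "p \<in> S" "TT \<delta> (z + u) = TT \<delta> (z + p)" by auto
    hence "z + u = z + p" using TT_inj[of \<delta> "z + u" "z + p"] dpos by simp
    hence "u = p" by simp
    thus False using p(1) that by simp
  qed
  have lat: "TT \<delta> (z + u) \<in> lattice_points \<delta>" if "u \<in> int_vecs" for u
    unfolding lattice_points_def using that z by (auto simp: int_vecs_def intro: Ints_add)
  let ?X = "{dist q (circumcenter \<tau>) - circumradius \<tau> | q. q \<in> lattice_points \<delta> \<and> q \<notin> \<tau>}"
  have wit: "sqrt (R2 + F) - sqrt R2 \<in> ?X"
  proof (cases "2 * \<delta>^2 \<le> 2 * a")
    case True
    hence F: "F = 2 * \<delta>^2" unfolding F_def by simp
    obtain i0 where i0: "rho i0 = CARD('n)" using rho_surj[of "CARD('n)"] d2 by auto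
    define u where "u = (\<chi> j. if j = i0 then (-1::real) else 0)"
    have uc: "u $ j = (if j = i0 then -1 else 0)" for j by (simp add: u_def)
    have ui: "u \<in> int_vecs" by (simp add: int_vecs_def uc)
    have uS: "u \<notin> S"
    proof
      assume "u \<in> S" hence "u \<in> cube_vertices" using cube by auto
      thus False using cube_val[of u i0] uc by simp
    qed
    have A: "Af u = 2" unfolding Af_def uc using single_sum[of "\<lambda>j v. v * (v - 1)" i0 "-1"] by simp
    have s2: "(\<Sum>j\<in>UNIV. (u$j)^2) = 1" unfolding uc using single_sum[of "\<lambda>j v. v^2" i0 "-1"] by simp
    have s1: "coord_sum u = -1" unfolding coord_sum_def uc using single_sum[of "\<lambda>j v. v" i0 "-1"] by simp
    have s3: "(\<Sum>j\<in>UNIV. EE j * u$j) = - EE i0" unfolding uc using single_sum[of "\<lambda>j v. EE j * v" i0 "-1"] by simp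
    have P: "Pf u = 0" unfolding Pf_def s1 s2 s3 i0 by simp
    have "(dist (TT \<delta> (z + u)) ?c)^2 = R2 + F" using df[of "z + u"] A P F by simp
    hence "dist (TT \<delta> (z + u)) ?c = sqrt (R2 + F)" by (metis sqrt_sq_dist)
    thus ?thesis unfolding cc cr using lat[OF ui] notin[OF uS] by force
  next
    case False
    hence F: "F = 2 * a" unfolding F_def by simp
    obtain i1 where i1: "rho i1 = 2" using rho_surj[of 2] d2 by auto
    define u where "u = (\<chi> j. if j = i1 then (1::real) else 0)"
    have uc: "u $ j = (if j = i1 then 1 else 0)" for j by (simp add: u_def)
    have ui: "u \<in> int_vecs" by (simp add: int_vecs_def uc)
    have uS: "u \<notin> S"
    proof
      assume uS: "u \<in> S"
      have "{j. u$j = 1} = {i1}" using uc by auto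
      hence "cntn u = 1" by (simp add: cntn_def)
      moreover have "rho i1 \<le> cntn u" using rho_char[OF uS, of i1] uc by simp
      ultimately show False using i1 by simp
    qed
    have A: "Af u = 0" by (rule Af_01) (simp add: uc)
    have s2: "(\<Sum>j\<in>UNIV. (u$j)^2) = 1" unfolding uc using single_sum[of "\<lambda>j v. v^2" i1 1] by simp
    have s1: "coord_sum u = 1" unfolding coord_sum_def uc using single_sum[of "\<lambda>j v. v" i1 1] by simp
    have s3: "(\<Sum>j\<in>UNIV. EE j * u$j) = EE i1" unfolding uc using single_sum[of "\<lambda>j v. EE j * v" i1 1] by simp
    have P: "Pf u = 2" unfolding Pf_def s1 s2 s3 i1 by simp
    have "(dist (TT \<delta> (z + u)) ?c)^2 = R2 + F" using df[of "z + u"] A P F by simp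
    hence "dist (TT \<delta> (z + u)) ?c = sqrt (R2 + F)" by (metis sqrt_sq_dist)
    thus ?thesis unfolding cc cr using lat[OF ui] notin[OF uS] by force
  qed
  have lb: "sqrt (R2 + F) - sqrt R2 \<le> y" if "y \<in> ?X" for y
  proof -
    have "y \<in> {dist q ?c - sqrt R2 | q. q \<in> lattice_points \<delta> \<and> q \<notin> \<tau>}"
      using that by (simp only: cc cr)
    then obtain q where q: "y = dist q ?c - sqrt R2" "q \<in> lattice_points \<delta>" "q \<notin> \<tau>"
      by blast
    obtain x where x: "x \<in> int_vecs" "q = TT \<delta> x" using q(2) unfolding lattice_points_def by auto
    let ?u = "x - z"
    have ui: "?u \<in> int_vecs" using x(1) z by (auto simp: int_vecs_def intro: Ints_diff)
    have uS: "?u \<notin> S"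
    proof
      assume h: "?u \<in> S"
      have "z + ?u \<in> (\<lambda>p. z + p) ` S" using h by (rule imageI)
      hence "TT \<delta> (z + ?u) \<in> \<tau>" unfolding \<tau>_def by (rule imageI)
      thus False using q(3) x(2) by simp
    qed
    have "R2 + F \<le> R2 + \<delta>^2 * Af ?u + a * Pf ?u"
    proof (cases "\<forall>i. ?u$i = 0 \<or> ?u$i = 1")
      case True
      have "Af ?u = 0" by (rule Af_01) (use True in auto)
      moreover have "2 \<le> Pf ?u" by (rule Pf_notin[OF ui]) (use True uS in auto)
      ultimately have "a * 2 \<le> a * Pf ?u" "Af ?u = 0" using a_nn by (simp_all add: mult_left_mono)
      moreover have "F \<le> 2 * a" unfolding F_def by simp
      ultimately show ?thesis by simp
    next
      case False
      then obtain i0 where "?u$i0 \<noteq> 0" "?u$i0 \<noteq> 1" by blast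
      hence "2 \<le> Af ?u" using Af_ge2[OF ui] by blast
      moreover have "0 \<le> Pf ?u" by (rule Pf_nonneg[OF ui])
      moreover have "0 \<le> \<delta>^2" by simp
      ultimately have "\<delta>^2 * 2 \<le> \<delta>^2 * Af ?u" "0 \<le> a * Pf ?u" using a_nn by (simp_all add: mult_left_mono)
      moreover have "F \<le> 2 * \<delta>^2" unfolding F_def by simp
      ultimately show ?thesis by simp
    qed
    also have "\<dots> = (dist q ?c)^2" using df[of x] x(2) by simp
    finally have "sqrt (R2 + F) \<le> sqrt ((dist q ?c)^2)" by (rule real_sqrt_le_mono)
    hence "sqrt (R2 + F) \<le> dist q ?c" by simp
    thus ?thesis using q(1) by simp
  qed
  have "simplex_protection \<delta> \<tau> = sqrt (R2 + F) - sqrt R2"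
    unfolding simplex_protection_def by (rule cInf_eq_minimum[OF wit lb])
  thus ?thesis using cr by simp
qed

end




lemma exists_fchain:
  "\<exists>S::(real^'n) set. S \<subseteq> cube_vertices \<and> card S = CARD('n) + 1 \<and> (\<forall>p\<in>S. \<forall>q\<in>S. comp_le p q \<or> comp_le q p)"
proof -
  obtain h where h: "bij_betw h (UNIV::'n set) {0..<CARD('n)}"
    using ex_bij_betw_finite_nat[of "UNIV::'n set"] by auto
  define chv :: "nat \<Rightarrow> real^'n" where "chv k = (\<chi> i. if h i < k then 1 else 0)" for k
  have cc: "chv k $ i = (if h i < k then 1 else 0)" for k i by (simp add: chv_def)
  have cnt: "cntn (chv k) = k" if "k \<le> CARD('n)" for k
  proof -
    have "{i. chv k $ i = 1} = {i. h i < k}" by (auto simp: cc)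
    moreover have "h ` {i. h i < k} = {0..<k}"
    proof
      show "h ` {i. h i < k} \<subseteq> {0..<k}" by auto
      show "{0..<k} \<subseteq> h ` {i. h i < k}"
      proof
        fix m assume m: "m \<in> {0..<k}"
        hence "m \<in> {0..<CARD('n)}" using that by auto
        then obtain i where "h i = m" using h unfolding bij_betw_def by (metis imageE)
        thus "m \<in> h ` {i. h i < k}" using m by auto
      qed
    qed
    moreover have "inj_on h {i. h i < k}" using h unfolding bij_betw_def by (auto intro: inj_on_subset)
    ultimately show ?thesis unfolding cntn_def by (metis card_atLeastLessThan card_image diff_zero)
  qed
  define S where "S = chv ` {0..CARD('n)}"
  have "S \<subseteq> cube_vertices" unfolding S_def cube_vertices_def by (auto simp: cc)
  moreover have "inj_on chv {0..CARD('n)}"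
  proof
    fix k l assume "k \<in> {0..CARD('n)}" "l \<in> {0..CARD('n)}" "chv k = chv l"
    thus "k = l" using cnt by (metis atLeastAtMost_iff)
  qed
  hence "card S = CARD('n) + 1" unfolding S_def by (simp add: card_image)
  moreover have "\<forall>p\<in>S. \<forall>q\<in>S. comp_le p q \<or> comp_le q p"
  proof (intro ballI)
    fix p q assume "p \<in> S" "q \<in> S"
    then obtain k l where kl: "p = chv k" "q = chv l" unfolding S_def by auto
    show "comp_le p q \<or> comp_le q p"
    proof (cases "k \<le> l")
      case True thus ?thesis unfolding kl comp_le_def cc by auto
    next
      case False thus ?thesis unfolding kl comp_le_def cc by auto
    qed
  qed
  ultimately show ?thesis by blast
qed

theorem theorem4:
  fixes \<delta> :: real
  assumes "CARD('n) \<ge> 2" and "0 < \<delta>" and "\<delta> \<le> 1"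
  defines "d \<equiv> real CARD('n)"
  defines "N \<equiv> \<delta>^4 * (d^2 - 1) + \<delta>^2 * (d^2 + 2) + d^2 - 1"
  defines "R \<equiv> sqrt (N / (12 * d))"
  shows "(\<forall>\<tau> \<in> (delaunay_simplices \<delta> :: (real^'n) set set). circumradius \<tau> = R)
    \<and> lattice_protection \<delta> TYPE('n) / R =
      (if 1 / sqrt (d + 1) < \<delta> then
         sqrt ((\<delta>^4 * (d^2 - 1) + \<delta>^2 * (d^2 - 22) + d^2 + 23) / N) - 1
       else if \<delta> = 1 / sqrt (d + 1) then
         sqrt ((d^2 + 2*d + 24) / (d^2 + 2*d)) - 1
       else
         sqrt ((\<delta>^4 * (d^2 - 1) + \<delta>^2 * (d^2 + 24*d + 2) + d^2 - 1) / N) - 1)"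
proof -
  define a where "a = (1 - \<delta>^2) / d"
  define R2 where "R2 = N / (12 * d)"
  define F where "F = min (2 * \<delta>^2) (2 * a)"
  define PV where "PV = sqrt (R2 + F) - sqrt R2"
  have R: "R = sqrt R2" unfolding R_def R2_def by simp
  have dge: "2 \<le> d" unfolding d_def using assms(1) by simp
  have simp_facts: "circumradius \<tau> = R \<and> simplex_protection \<delta> \<tau> = PV"
    if "\<tau> \<in> (delaunay_simplices \<delta> :: (real^'n) set set)" for \<tau>
  proof -
    have "\<tau> \<in> (\<lambda>\<sigma>. TT \<delta> ` \<sigma>) ` (freudenthal_simplices :: (real^'n) set set)"
      using that by (simp add: delaunay_simplices_def)
    then obtain \<sigma> where \<sigma>: "\<sigma> \<in> freudenthal_simplices" "\<tau> = TT \<delta> ` \<sigma>" by auto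
    from \<sigma>(1) obtain z S where zS: "\<sigma> = (\<lambda>p. z + p) ` S" "z \<in> int_vecs" "S \<subseteq> cube_vertices"
      "card S = CARD('n) + 1" "\<forall>p\<in>S. \<forall>q\<in>S. comp_le p q \<or> comp_le q p"
      unfolding freudenthal_simplices_def by blast
    interpret fchain S using zS(3-5) by unfold_locales
    have "circumradius \<tau> = sqrt R2 \<and> simplex_protection \<delta> \<tau> = sqrt (R2 + F) - sqrt R2"
      unfolding \<sigma>(2) zS(1) R2_def F_def a_def N_def d_def
      by (rule main_simplex[OF assms(2) assms(3) zS(2) assms(1)])
    thus ?thesis unfolding R PV_def .
  qed
  obtain S0 :: "(real^'n) set" where S0: "S0 \<subseteq> cube_vertices" "card S0 = CARD('n) + 1"
      "\<forall>p\<in>S0. \<forall>q\<in>S0. comp_le p q \<or> comp_le q p"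
    using exists_fchain by blast
  have z0: "(0::real^'n) \<in> int_vecs" by (simp add: int_vecs_def)
  have "(\<lambda>p. 0 + p) ` S0 \<in> freudenthal_simplices"
    unfolding freudenthal_simplices_def using S0 z0 by blast
  hence t0: "TT \<delta> ` ((\<lambda>p. 0 + p) ` S0) \<in> (delaunay_simplices \<delta> :: (real^'n) set set)"
    unfolding delaunay_simplices_def by blast
  have LP: "lattice_protection \<delta> TYPE('n) = PV"
    unfolding lattice_protection_def
  proof (rule cInf_eq_minimum)
    show "PV \<in> simplex_protection \<delta> ` (delaunay_simplices \<delta> :: (real^'n) set set)"
      using simp_facts[OF t0] t0 by (metis image_eqI)
    fix x assume "x \<in> simplex_protection \<delta> ` (delaunay_simplices \<delta> :: (real^'n) set set)"
    thus "PV \<le> x" using simp_facts by auto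
  qed
  have "2 * 2 \<le> d * d" by (rule mult_mono) (use dge in auto)
  hence dd4: "4 \<le> d^2" by (simp add: power2_eq_square)
  have Npos: "0 < N"
  proof -
    have "0 \<le> \<delta>^4 * (d^2 - 1)" using dd4 by (intro mult_nonneg_nonneg) auto
    moreover have "0 \<le> \<delta>^2 * (d^2 + 2)" by simp
    moreover have "0 < d^2 - 1" using dd4 by simp
    ultimately show ?thesis unfolding N_def by linarith
  qed
  have dpos: "0 < d" using dge by simp
  have pos_facts: "0 < d + 1" "0 < d * d" "0 < d + d * d" "0 < d * d + 2 * d" "0 < d^2" "0 < d^2 + 2 * d"
    "0 < d * (d * d) + 2 * (d * d)" "0 < d^2 * (d + 2)"
    using dpos by (simp_all add: add_pos_pos)
  have R2pos: "0 < R2" unfolding R2_def using Npos dpos by simp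
  have ratio: "lattice_protection \<delta> TYPE('n) / R = sqrt ((N + 12 * d * F) / N) - 1"
  proof -
    have "lattice_protection \<delta> TYPE('n) / R = sqrt (R2 + F) / sqrt R2 - 1"
      unfolding LP PV_def R using R2pos by (simp add: diff_divide_distrib)
    also have "sqrt (R2 + F) / sqrt R2 = sqrt ((R2 + F) / R2)" by (simp add: real_sqrt_divide)
    also have "(R2 + F) / R2 = (N + 12 * d * F) / N" unfolding R2_def using Npos dpos by (simp add: field_simps)
    finally show ?thesis .
  qed
  define s where "s = sqrt (d + 1)"
  have spos: "0 < s" unfolding s_def using dpos by simp
  have s2: "s^2 = d + 1" unfolding s_def using dpos by simp
  define x where "x = \<delta> * s"
  have xpos: "0 < x" unfolding x_def using assms(2) spos by simp
  have x2: "x^2 = \<delta>^2 * (d + 1)" unfolding x_def using s2 by (simp add: power_mult_distrib)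
  have c1: "1 / s < \<delta> \<longleftrightarrow> 1 < x" unfolding x_def using spos by (simp add: divide_less_eq mult.commute)
  have c2: "\<delta> = 1 / s \<longleftrightarrow> x = 1" unfolding x_def using spos by (auto simp: field_simps)
  have aeq: "2 * a \<le> 2 * \<delta>^2 \<longleftrightarrow> 1 \<le> \<delta>^2 * (d + 1)"
  proof -
    have "2 * a \<le> 2 * \<delta>^2 \<longleftrightarrow> a \<le> \<delta>^2" by simp
    also have "\<dots> \<longleftrightarrow> 1 - \<delta>^2 \<le> \<delta>^2 * d" unfolding a_def using dpos by (simp add: pos_divide_le_eq)
    also have "\<dots> \<longleftrightarrow> 1 \<le> \<delta>^2 * (d + 1)"
    proof -
      have e: "\<delta>^2 * (d + 1) = \<delta>^2 * d + \<delta>^2" by (simp add: distrib_left)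
      show ?thesis unfolding e by auto
    qed
    finally show ?thesis .
  qed
  have d4: "\<delta>^4 = (\<delta>^2)^2" by simp
  show ?thesis
  proof (intro conjI)
    show "\<forall>\<tau> \<in> (delaunay_simplices \<delta> :: (real^'n) set set). circumradius \<tau> = R" using simp_facts by blast
  next
    consider (gt) "1 < x" | (eq) "x = 1" | (lt) "x < 1" by linarith
    then show "lattice_protection \<delta> TYPE('n) / R = (if 1 / sqrt (d + 1) < \<delta> then
         sqrt ((\<delta>^4 * (d^2 - 1) + \<delta>^2 * (d^2 - 22) + d^2 + 23) / N) - 1
       else if \<delta> = 1 / sqrt (d + 1) then
         sqrt ((d^2 + 2*d + 24) / (d^2 + 2*d)) - 1
       else
         sqrt ((\<delta>^4 * (d^2 - 1) + \<delta>^2 * (d^2 + 24*d + 2) + d^2 - 1) / N) - 1)"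
    proof cases
      case gt
      have "1 < x^2" using gt by (simp add: one_less_power)
      hence "1 \<le> \<delta>^2 * (d + 1)" using x2 by simp
      hence F: "F = 2 * a" unfolding F_def using aeq by simp
      have "N + 12 * d * F = \<delta>^4 * (d^2 - 1) + \<delta>^2 * (d^2 - 22) + d^2 + 23"
        unfolding F a_def N_def using dpos pos_facts by (simp add: field_simps)
      hence "(N + 12 * d * F) / N = (\<delta>^4 * (d^2 - 1) + \<delta>^2 * (d^2 - 22) + d^2 + 23) / N" by simp
      thus ?thesis using ratio c1 gt unfolding s_def by simp
    next
      case eq
      hence dd: "\<delta>^2 = 1 / (d + 1)" using x2 dpos by (simp add: field_simps)
      hence "1 \<le> \<delta>^2 * (d + 1)" using dpos by simp
      hence F: "F = 2 * a" unfolding F_def using aeq by simp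
      have ad: "a = 1 / (d + 1)" unfolding a_def dd using dpos pos_facts by (simp add: field_simps)
      have Ne: "N = d^2 * (d + 2) / (d + 1)"
        unfolding N_def d4 dd using dpos pos_facts by (simp add: field_simps power2_eq_square)
      have Fe: "12 * d * F = 24 * d / (d + 1)" unfolding F ad by simp
      have gen: "(A / c) / (B / c) = A / B" if "c \<noteq> 0" for A B c :: real
        using that by (cases "B = 0") (simp_all add: field_simps)
      have "N + 12 * d * F = (d^2 * (d + 2) + 24 * d) / (d + 1)"
        unfolding Ne Fe by (simp add: add_divide_distrib)
      hence "(N + 12 * d * F) / N = (d^2 * (d + 2) + 24 * d) / (d^2 * (d + 2))"
        unfolding Ne using gen pos_facts by simp
      also have "\<dots> = (d^2 + 2*d + 24) / (d^2 + 2*d)"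
        using dpos pos_facts by (simp add: field_simps power2_eq_square)
      finally have "(N + 12 * d * F) / N = (d^2 + 2*d + 24) / (d^2 + 2*d)" .
      moreover have "\<not> 1 / sqrt (d + 1) < \<delta>" using c1 eq unfolding s_def by simp
      moreover have "\<delta> = 1 / sqrt (d + 1)" using c2 eq unfolding s_def by simp
      ultimately show ?thesis using ratio by simp
    next
      case lt
      have "x^2 < 1" using lt xpos by (simp add: power_less_one_iff abs_less_iff)
      hence "\<delta>^2 * (d + 1) < 1" using x2 by simp
      hence F: "F = 2 * \<delta>^2" unfolding F_def using aeq by simp
      have "N + 12 * d * F = \<delta>^4 * (d^2 - 1) + \<delta>^2 * (d^2 + 24*d + 2) + d^2 - 1"
        unfolding F N_def using dpos pos_facts by (simp add: field_simps)
      hence "(N + 12 * d * F) / N = (\<delta>^4 * (d^2 - 1) + \<delta>^2 * (d^2 + 24*d + 2) + d^2 - 1) / N" by simp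
      moreover have "\<not> 1 / sqrt (d + 1) < \<delta>" using c1 lt unfolding s_def by simp
      moreover have "\<delta> \<noteq> 1 / sqrt (d + 1)" using c2 lt unfolding s_def by simp
      ultimately show ?thesis using ratio by simp
    qed
  qed
qed



end
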